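(* Let $(G,\omega,\mu)$ be an infinite, connected weighted graph, and let $d$ be a pseudo metric on $G$ which is intrinsic, is also $1$-intrinsic with bound $C_0>0$, has finite jump size $s$, and has finite balls. Let $V:G\to\mathbb{R}$ satisfy $c_0:=\inf_G V>0$. Let $u$ be a solution of $\Delta u - Vu=0$ in $G$. Let $p\ge1$ and $\alpha>0$ be such that $$C_0\,\alpha\, e^{s\alpha} < c_0 p.$$ Fix $x_0\in G$ and suppose $u\in\ell^p_{\varphi_\alpha}(G,\mu)$, where $\varphi_\alpha(x)=e^{-\alpha d(x,x_0)}$. Then $u(x)=0$ for all $x\in G$.
   Context: A weighted graph $(G,\omega,\mu)$: $G$ countable, $\mu:G\to(0,\infty)$, $\omega:G\times G\to[0,\infty)$ symmetric with $\omega(x,x)=0$ and $\sum_y\omega(x,y)<\infty$; $x\sim y$ iff $\omega(x,y)>0$; connected means any two vertices are joined by a finite path. Laplacian $\Delta f(x)=\frac{1}{\mu(x)}\sum_{y}[f(y)-f(x)]\omega(x,y)$. A pseudo metric $d$ is a symmetric nonnegative function with $d(x,x)=0$ satisfying the triangle inequality. Jump size $s:=\sup\{d(x,y):\omega(x,y)>0\}$. For $q\ge1$, $C_0>0$, $d$ is $q$-intrinsic with bound $C_0$ if $\frac{1}{\mu(x)}\sum_y\omega(x,y)d^q(x,y)\le C_0$ for all $x$; intrinsic means $2$-intrinsic with bound $1$. $B_r(x)=\{y:d(y,x)<r\}$; finite balls means each $B_r(x)$ is finite. For $\varphi:G\to(0,\infty)$, $\ell^p_\varphi(G,\mu)=\{u:\sum_x|u(x)|^p\varphi(x)\mu(x)<\infty\}$.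 *)

theory Defs
  imports "HOL-Analysis.Analysis"
begin

text \<open>Vertex set G is the whole (countable) type 'a.\<close>

definition weighted_graph :: "('a \<Rightarrow> 'a \<Rightarrow> real) \<Rightarrow> ('a \<Rightarrow> real) \<Rightarrow> bool" where
  "weighted_graph \<omega> \<mu> \<longleftrightarrow>
     (\<forall>x. \<mu> x > 0) \<and> (\<forall>x y. \<omega> x y \<ge> 0) \<and> (\<forall>x y. \<omega> x y = \<omega> y x) \<and>
     (\<forall>x. \<omega> x x = 0) \<and> (\<forall>x. (\<lambda>y. \<omega> x y) summable_on UNIV)"

definition adjacent :: "('a \<Rightarrow> 'a \<Rightarrow> real) \<Rightarrow> 'a \<Rightarrow> 'a \<Rightarrow> bool" where
  "adjacent \<omega> x y \<longleftrightarrow> \<omega> x y > 0"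

definition graph_connected :: "('a \<Rightarrow> 'a \<Rightarrow> real) \<Rightarrow> bool" where
  "graph_connected \<omega> \<longleftrightarrow> (\<forall>x y. (adjacent \<omega>)\<^sup>*\<^sup>* x y)"

definition laplacian :: "('a \<Rightarrow> 'a \<Rightarrow> real) \<Rightarrow> ('a \<Rightarrow> real) \<Rightarrow> ('a \<Rightarrow> real) \<Rightarrow> 'a \<Rightarrow> real" where
  "laplacian \<omega> \<mu> f x = (1 / \<mu> x) * (\<Sum>\<^sub>\<infinity>y. (f y - f x) * \<omega> x y)"

definition in_lap_domain :: "('a \<Rightarrow> 'a \<Rightarrow> real) \<Rightarrow> ('a \<Rightarrow> real) \<Rightarrow> bool" where
  "in_lap_domain \<omega> f \<longleftrightarrow> (\<forall>x. (\<lambda>y. (f y - f x) * \<omega> x y) summable_on UNIV)"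

definition schroedinger_solution ::
  "('a \<Rightarrow> 'a \<Rightarrow> real) \<Rightarrow> ('a \<Rightarrow> real) \<Rightarrow> ('a \<Rightarrow> real) \<Rightarrow> ('a \<Rightarrow> real) \<Rightarrow> bool" where
  "schroedinger_solution \<omega> \<mu> V u \<longleftrightarrow>
     in_lap_domain \<omega> u \<and> (\<forall>x. laplacian \<omega> \<mu> u x - V x * u x = 0)"

definition pseudo_metric :: "('a \<Rightarrow> 'a \<Rightarrow> real) \<Rightarrow> bool" where
  "pseudo_metric d \<longleftrightarrow> (\<forall>x y. d x y \<ge> 0) \<and> (\<forall>x y. d x y = d y x) \<and> (\<forall>x. d x x = 0) \<and>
     (\<forall>x y z. d x z \<le> d x y + d y z)"

definition q_intrinsic :: "('a \<Rightarrow> 'a \<Rightarrow> real) \<Rightarrow> ('a \<Rightarrow> real) \<Rightarrow> ('a \<Rightarrow> 'a \<Rightarrow> real) \<Rightarrow> real \<Rightarrow> real \<Rightarrow> bool" where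
  "q_intrinsic \<omega> \<mu> d q C0 \<longleftrightarrow>
     (\<forall>x. (\<lambda>y. \<omega> x y * d x y powr q) summable_on UNIV \<and>
          (1 / \<mu> x) * (\<Sum>\<^sub>\<infinity>y. \<omega> x y * d x y powr q) \<le> C0)"

definition intrinsic :: "('a \<Rightarrow> 'a \<Rightarrow> real) \<Rightarrow> ('a \<Rightarrow> real) \<Rightarrow> ('a \<Rightarrow> 'a \<Rightarrow> real) \<Rightarrow> bool" where
  "intrinsic \<omega> \<mu> d \<longleftrightarrow> q_intrinsic \<omega> \<mu> d 2 1"

definition jump_set :: "('a \<Rightarrow> 'a \<Rightarrow> real) \<Rightarrow> ('a \<Rightarrow> 'a \<Rightarrow> real) \<Rightarrow> real set" where
  "jump_set \<omega> d = {d x y | x y. \<omega> x y > 0}"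

definition jump_size :: "('a \<Rightarrow> 'a \<Rightarrow> real) \<Rightarrow> ('a \<Rightarrow> 'a \<Rightarrow> real) \<Rightarrow> real" where
  "jump_size \<omega> d = Sup (jump_set \<omega> d)"

definition finite_balls :: "('a \<Rightarrow> 'a \<Rightarrow> real) \<Rightarrow> bool" where
  "finite_balls d \<longleftrightarrow> (\<forall>x r. finite {y. d y x < r})"

definition weighted_lp :: "real \<Rightarrow> ('a \<Rightarrow> real) \<Rightarrow> ('a \<Rightarrow> real) \<Rightarrow> ('a \<Rightarrow> real) set" where
  "weighted_lp p \<phi> \<mu> = {u. (\<lambda>x. \<bar>u x\<bar> powr p * \<phi> x * \<mu> x) summable_on UNIV}"

end

theory Submission imports Defs begin

lemma summable_on_diff_real:
  fixes f g :: "'b \<Rightarrow> real"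
  assumes "f summable_on A" "g summable_on A"
  shows "(\<lambda>x. f x - g x) summable_on A"
    "infsum (\<lambda>x. f x - g x) A = infsum f A - infsum g A"
proof -
  have ng: "(\<lambda>x. - g x) summable_on A" using assms(2) summable_on_uminus by blast
  then show "(\<lambda>x. f x - g x) summable_on A" using summable_on_add[OF assms(1) ng] by simp
  show "infsum (\<lambda>x. f x - g x) A = infsum f A - infsum g A"
    using infsum_add[OF assms(1) \<open>(\<lambda>x. - g x) summable_on A\<close>] infsum_uminus[of g A] by simp
qed

lemma summable_on_finsum_real:
  fixes f :: "'i \<Rightarrow> 'b \<Rightarrow> real"
  assumes "finite S" "\<And>i. i \<in> S \<Longrightarrow> f i summable_on A"
  shows "(\<lambda>x. \<Sum>i\<in>S. f i x) summable_on A \<and> infsum (\<lambda>x. \<Sum>i\<in>S. f i x) A = (\<Sum>i\<in>S. infsum (f i) A)"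
  using assms
proof (induction S rule: finite_induct)
  case empty
  then show ?case by simp
next
  case (insert j S)
  then have h1: "(\<lambda>x. \<Sum>i\<in>S. f i x) summable_on A" and h2: "infsum (\<lambda>x. \<Sum>i\<in>S. f i x) A = (\<Sum>i\<in>S. infsum (f i) A)"
    by auto
  have h3: "f j summable_on A" using insert by auto
  show ?case using summable_on_add[OF h3 h1] infsum_add[OF h3 h1] h2 insert.hyps by simp
qed

lemma tangent_powr:
  fixes p a b :: real
  assumes "p \<ge> 1"
  shows "p * sgn a * \<bar>a\<bar> powr (p-1) * (b - a) \<le> \<bar>b\<bar> powr p - \<bar>a\<bar> powr p"
proof (cases "a = 0")
  case True
  then show ?thesis by simp
next
  case False
  let ?c = "\<bar>a\<bar>" let ?t = "\<bar>b\<bar>"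
  have c0: "?c > 0" using False by simp
  have tan: "p * ?c powr (p-1) * (?t - ?c) \<le> ?t powr p - ?c powr p"
  proof (cases "b = 0")
    case True
    have "?c powr p = ?c powr (p-1) * ?c" using c0 by (simp add: powr_diff)
    then have "p * ?c powr (p-1) * (0 - ?c) = - p * ?c powr p" by simp
    also have "\<dots> \<le> 0 - ?c powr p" using assms c0 by (simp add: mult_le_cancel_right1)
    finally show ?thesis using True by simp
  next
    case bF: False
    show ?thesis
      by (rule convex_on_imp_above_tangent[where A="{0<..}" and f="\<lambda>x. x powr p"])
         (use assms c0 bF in \<open>auto intro!: powr_convex derivative_eq_intros simp: interior_open\<close>)
  qed
  have "sgn a * (b - a) \<le> ?t - ?c"
    by (cases "a > 0") (auto simp: sgn_if abs_if)
  moreover have "p * ?c powr (p-1) \<ge> 0" using assms by simp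
  ultimately have "p * ?c powr (p-1) * (sgn a * (b - a)) \<le> p * ?c powr (p-1) * (?t - ?c)"
    by (rule mult_left_mono)
  then show ?thesis using tan by (simp add: mult_ac)
qed


lemma term_bound:
  fixes fx fy cx cy d a R om :: real
  assumes "0 \<le> fx" "fx \<le> fy * (1 + a*d)" "0 \<le> cx" "cx \<le> cy + d/R" "0 \<le> cy"
    "0 \<le> fy" "0 \<le> d" "0 \<le> om" "0 \<le> a" "0 < R"
  shows "(fx*cx - fy*cy) * om \<le> a * (fy*cy) * (om*d) + (fy/R) * (om*d + a*(om*d^2))"
proof -
  have "fx*cx \<le> (fy * (1 + a*d)) * (cy + d/R)"
    using assms by (intro mult_mono) auto
  also have "\<dots> = fy*cy + a*d*(fy*cy) + (fy/R)*(d + a*d^2)"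
    using assms(10) by (simp add: field_simps power2_eq_square)
  finally have "fx*cx - fy*cy \<le> a*d*(fy*cy) + (fy/R)*(d + a*d^2)" by simp
  then have "(fx*cx - fy*cy) * om \<le> (a*d*(fy*cy) + (fy/R)*(d + a*d^2)) * om"
    using assms(8) by (rule mult_right_mono)
  also have "\<dots> = a * (fy*cy) * (om*d) + (fy/R) * (om*d + a*(om*d^2))"
    by (simp add: field_simps)
  finally show ?thesis .
qed

lemma exp_tangent: "(t::real) \<ge> 0 \<Longrightarrow> exp t \<le> 1 + t * exp t"
proof -
  assume "t \<ge> 0"
  have "1 - t \<le> exp (-t)" using exp_ge_add_one_self[of "-t"] by simp
  then have "(1 - t) * exp t \<le> exp (-t) * exp t" by (rule mult_right_mono) simp
  then show ?thesis by (simp add: exp_minus field_simps)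
qed

lemma clamp_lip:
  fixes f g t :: real
  assumes "f \<le> g + t" "t \<ge> 0"
  shows "max 0 (min 1 f) \<le> max 0 (min 1 g) + t"
  using assms by (auto simp: max_def min_def)


theorem theorem3p3:
  fixes \<omega> :: "'a::countable \<Rightarrow> 'a \<Rightarrow> real" and \<mu> :: "'a \<Rightarrow> real"
    and d :: "'a \<Rightarrow> 'a \<Rightarrow> real" and V u :: "'a \<Rightarrow> real"
    and C0 p \<alpha> :: real and x0 :: 'a
  assumes "weighted_graph \<omega> \<mu>"
    and "infinite (UNIV :: 'a set)"
    and "graph_connected \<omega>"
    and "pseudo_metric d"
    and "intrinsic \<omega> \<mu> d"
    and "C0 > 0" and "q_intrinsic \<omega> \<mu> d 1 C0"
    and "bdd_above (jump_set \<omega> d)"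
    and "finite_balls d"
    and "bdd_below (range V)" and "(INF x. V x) > 0"
    and "schroedinger_solution \<omega> \<mu> V u"
    and "p \<ge> 1" and "\<alpha> > 0"
    and "C0 * \<alpha> * exp (jump_size \<omega> d * \<alpha>) < (INF x. V x) * p"
    and "u \<in> weighted_lp p (\<lambda>x. exp (- \<alpha> * d x x0)) \<mu>"
  shows "\<forall>x. u x = 0"
proof -
  note wg = assms(1)[unfolded weighted_graph_def]
  have mu: "\<And>x. \<mu> x > 0" and om0: "\<And>x y. \<omega> x y \<ge> 0" and oms: "\<And>x y. \<omega> x y = \<omega> y x"
    and degs: "\<And>x. (\<lambda>y. \<omega> x y) summable_on UNIV" using wg by auto
  note pm = assms(4)[unfolded pseudo_metric_def]
  have d0: "\<And>x y. d x y \<ge> 0" and ds: "\<And>x y. d x y = d y x" and tri: "\<And>x y z. d x z \<le> d x y + d y z"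
    using pm by auto
  have I2s: "\<And>x. (\<lambda>y. \<omega> x y * d x y ^ 2) summable_on UNIV"
    and I2: "\<And>x. (\<Sum>\<^sub>\<infinity>y. \<omega> x y * d x y ^ 2) \<le> \<mu> x"
  proof -
    fix x
    have "(\<lambda>y. \<omega> x y * d x y powr 2) summable_on UNIV \<and> (1 / \<mu> x) * (\<Sum>\<^sub>\<infinity>y. \<omega> x y * d x y powr 2) \<le> 1"
      using assms(5) unfolding intrinsic_def q_intrinsic_def by auto
    moreover have "\<And>y. d x y powr 2 = d x y ^ 2" using d0 by simp
    ultimately show "(\<lambda>y. \<omega> x y * d x y ^ 2) summable_on UNIV" "(\<Sum>\<^sub>\<infinity>y. \<omega> x y * d x y ^ 2) \<le> \<mu> x"
      using mu[of x] by (auto simp: field_simps)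
  qed
  have I1s: "\<And>x. (\<lambda>y. \<omega> x y * d x y) summable_on UNIV"
    and I1: "\<And>x. (\<Sum>\<^sub>\<infinity>y. \<omega> x y * d x y) \<le> C0 * \<mu> x"
  proof -
    fix x
    have "(\<lambda>y. \<omega> x y * d x y powr 1) summable_on UNIV \<and> (1 / \<mu> x) * (\<Sum>\<^sub>\<infinity>y. \<omega> x y * d x y powr 1) \<le> C0"
      using assms(7) unfolding q_intrinsic_def by auto
    moreover have "\<And>y. d x y powr 1 = d x y" using d0 by simp
    ultimately show "(\<lambda>y. \<omega> x y * d x y) summable_on UNIV" "(\<Sum>\<^sub>\<infinity>y. \<omega> x y * d x y) \<le> C0 * \<mu> x"
      using mu[of x] by (auto simp: field_simps)
  qed
  define s where "s = jump_size \<omega> d"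
  have jump: "\<And>x y. \<omega> x y > 0 \<Longrightarrow> d x y \<le> s"
  proof -
    fix x y assume "\<omega> x y > 0"
    then have "d x y \<in> jump_set \<omega> d" unfolding jump_set_def by auto
    then show "d x y \<le> s" unfolding s_def jump_size_def using assms(8) by (rule cSup_upper)
  qed
  define c0 where "c0 = (INF x. V x)"
  have Vc: "\<And>x. c0 \<le> V x" unfolding c0_def using assms(10) by (simp add: cINF_lower)
  have c0p: "c0 > 0" using assms(11) c0_def by simp
  define \<phi> where "\<phi> x = exp (- \<alpha> * d x x0)" for x
  define w where "w x = \<bar>u x\<bar> powr p" for x
  have w0: "\<And>x. w x \<ge> 0" unfolding w_def by simp
  have phi0: "\<And>x. \<phi> x > 0" unfolding \<phi>_def by simp
  have Asum: "(\<lambda>x. w x * \<phi> x * \<mu> x) summable_on UNIV"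
    using assms(16) unfolding weighted_lp_def w_def \<phi>_def by simp
  define A where "A = (\<Sum>\<^sub>\<infinity>x. w x * \<phi> x * \<mu> x)"
  have A0: "A \<ge> 0" unfolding A_def by (rule infsum_nonneg) (meson w0 phi0 mu less_imp_le mult_nonneg_nonneg)
  define a where "a = \<alpha> * exp (s * \<alpha>)"
  have a0: "a > 0" unfolding a_def using assms(14) by simp
  have eps: "C0 * a < c0 * p" using assms(15) unfolding a_def s_def c0_def by (simp add: mult.assoc)
  have wsum: "(\<lambda>y. w y * \<omega> x y) summable_on UNIV" for x
  proof -
    define B where "B = {y. d y x < 1}"
    have Bf: "finite B" using assms(9) unfolding finite_balls_def B_def by auto
    define K where "K = exp (\<alpha> * (d x x0 + s))"
    have "(\<lambda>y. w y * \<omega> x y) summable_on (UNIV - B)"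
    proof (rule summable_on_comparison_test)
      show "(\<lambda>y. K * (w y * \<phi> y * \<mu> y)) summable_on (UNIV - B)"
        using summable_on_subset[OF summable_on_cmult_right[OF Asum]] by blast
      show "0 \<le> w y * \<omega> x y" for y using w0 om0 by simp
      show "w y * \<omega> x y \<le> K * (w y * \<phi> y * \<mu> y)" if "y \<in> UNIV - B" for y
      proof (cases "\<omega> x y > 0")
        case False
        then have "\<omega> x y = 0" using om0[of x y] by linarith
        then show ?thesis using w0 phi0 mu unfolding K_def by (simp add: less_imp_le)
      next
        case True
        have dxy: "d x y \<le> s" using jump[OF True] .
        have dge: "d y x \<ge> 1" using that unfolding B_def by auto
        have "\<omega> x y \<le> \<omega> y x * d y x ^ 2"
        proof -
          have "1 \<le> d y x ^ 2" using dge by (simp add: one_le_power)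
          then show ?thesis using om0[of x y] oms[of x y] by (metis mult.right_neutral mult_left_mono)
        qed
        also have "\<dots> = (\<Sum>z\<in>{x}. \<omega> y z * d y z ^ 2)" by simp
        also have "\<dots> \<le> (\<Sum>\<^sub>\<infinity>z. \<omega> y z * d y z ^ 2)"
          by (rule finite_sum_le_infsum[OF I2s]) (auto simp: om0)
        also have "\<dots> \<le> \<mu> y" by (rule I2)
        finally have om_mu: "\<omega> x y \<le> \<mu> y" .
        have "1 \<le> K * \<phi> y"
        proof -
          have "d y x0 \<le> d y x + d x x0" by (rule tri)
          then have "d y x0 \<le> s + d x x0" using dxy ds[of x y] by simp
          then have "\<alpha> * d y x0 \<le> \<alpha> * (d x x0 + s)" using assms(14) by simp
          then have "0 \<le> \<alpha> * (d x x0 + s) + - \<alpha> * d y x0" by simp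
          then have "1 \<le> exp (\<alpha> * (d x x0 + s) + - \<alpha> * d y x0)" by (simp only: one_le_exp_iff)
          then show ?thesis unfolding K_def \<phi>_def by (simp only: exp_add)
        qed
        then have "\<omega> x y \<le> K * \<phi> y * \<mu> y" using om_mu mu[of y]
          by (metis (no_types, opaque_lifting) less_imp_le mult.commute mult_left_mono mult_1 order_trans)
        then have "w y * \<omega> x y \<le> w y * (K * \<phi> y * \<mu> y)" using w0[of y] by (rule mult_left_mono)
        then show ?thesis by (simp add: mult_ac)
      qed
    qed
    moreover have "(\<lambda>y. w y * \<omega> x y) summable_on B" using Bf by simp
    ultimately have "(\<lambda>y. w y * \<omega> x y) summable_on ((UNIV - B) \<union> B)" by (rule summable_on_union)
    then show ?thesis by simp
  qed
  define L where "L x = (\<Sum>\<^sub>\<infinity>y. (w y - w x) * \<omega> x y)" for x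
  have kato: "p * c0 * w x * \<mu> x \<le> L x" for x
  proof -
    have usum: "(\<lambda>y. (u y - u x) * \<omega> x y) summable_on UNIV"
      using assms(12) unfolding schroedinger_solution_def in_lap_domain_def by auto
    have "laplacian \<omega> \<mu> u x - V x * u x = 0"
      using assms(12) unfolding schroedinger_solution_def by auto
    then have "(1 / \<mu> x) * (\<Sum>\<^sub>\<infinity>y. (u y - u x) * \<omega> x y) = V x * u x"
      unfolding laplacian_def by simp
    then have lap: "(\<Sum>\<^sub>\<infinity>y. (u y - u x) * \<omega> x y) = \<mu> x * V x * u x"
      using mu[of x] by (simp add: field_simps)
    define k where "k = p * sgn (u x) * \<bar>u x\<bar> powr (p-1)"
    have kk: "k * u x = p * w x"
    proof (cases "u x = 0")
      case True then show ?thesis unfolding k_def w_def using assms(13) by simp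
    next
      case False
      have "\<bar>u x\<bar> powr (p - 1) * \<bar>u x\<bar> = \<bar>u x\<bar> powr p"
        using False by (simp add: powr_diff)
      moreover have "sgn (u x) * u x = \<bar>u x\<bar>" by (simp add: sgn_mult_abs abs_sgn mult.commute)
      ultimately show ?thesis unfolding k_def w_def by (metis mult.assoc mult.commute)
    qed
    have "p * c0 * w x * \<mu> x \<le> p * V x * w x * \<mu> x"
      using Vc[of x] assms(13) w0[of x] mu[of x] by (intro mult_right_mono mult_left_mono) auto
    also have "\<dots> = k * (\<Sum>\<^sub>\<infinity>y. (u y - u x) * \<omega> x y)"
      using kk lap by (simp add: mult_ac)
    also have "\<dots> = (\<Sum>\<^sub>\<infinity>y. k * ((u y - u x) * \<omega> x y))"
      by (simp add: infsum_cmult_right')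
    also have "\<dots> \<le> L x"
      unfolding L_def
    proof (rule infsum_mono)
      show "(\<lambda>y. k * ((u y - u x) * \<omega> x y)) summable_on UNIV"
        by (rule summable_on_cmult_right[OF usum])
      show "(\<lambda>y. (w y - w x) * \<omega> x y) summable_on UNIV"
        using summable_on_diff_real(1)[OF wsum[of x] summable_on_cmult_right[OF degs[of x], of "w x"]]
        by (simp add: algebra_simps)
      show "k * ((u y - u x) * \<omega> x y) \<le> (w y - w x) * \<omega> x y" for y
      proof -
        have "k * (u y - u x) \<le> w y - w x"
          using tangent_powr[OF assms(13), of "u x" "u y"] unfolding k_def w_def by simp
        then have "k * (u y - u x) * \<omega> x y \<le> (w y - w x) * \<omega> x y"
          using om0[of x y] by (rule mult_right_mono)
        then show ?thesis by (simp add: mult_ac)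
      qed
    qed
    finally show ?thesis .
  qed
  have main: "(c0*p - C0*a) * (\<Sum>x\<in>{y. d y x0 < 2*R}. w x * (\<phi> x * max 0 (min 1 ((2*R - d x x0)/R))) * \<mu> x) \<le> (C0 + a) * A / R"
    if R0: "R > 0" for R
  proof -
    define chi where "chi x = max 0 (min 1 ((2*R - d x x0)/R))" for x
    define \<psi> where "\<psi> x = \<phi> x * chi x" for x
    define S where "S = {y. d y x0 < 2*R}"
    define T where "T = (\<Sum>x\<in>S. w x * \<psi> x * \<mu> x)"
    have Sf: "finite S" using assms(9) unfolding finite_balls_def S_def by auto
    have chi01: "0 \<le> chi x" "chi x \<le> 1" for x unfolding chi_def by auto
    have psi0: "\<psi> x = 0" if "x \<notin> S" for x
    proof -
      have "d x x0 \<ge> 2*R" using that unfolding S_def by auto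
      then have "(2*R - d x x0)/R \<le> 0" using R0 by (simp add: divide_nonpos_pos)
      then show ?thesis unfolding \<psi>_def chi_def by simp
    qed
    have psinn: "\<psi> x \<ge> 0" for x unfolding \<psi>_def using phi0[of x] chi01[of x] by simp
    define deg where "deg x = (\<Sum>\<^sub>\<infinity>y. \<omega> x y)" for x
    define M where "M y = (\<Sum>x\<in>S. \<psi> x * \<omega> y x)" for y
    have Msum: "(\<lambda>x. \<psi> x * \<omega> y x) summable_on UNIV" "(\<Sum>\<^sub>\<infinity>x. \<psi> x * \<omega> y x) = M y" for y
    proof -
      have "(\<lambda>x. \<psi> x * \<omega> y x) summable_on UNIV \<longleftrightarrow> (\<lambda>x. \<psi> x * \<omega> y x) summable_on S"
        by (rule summable_on_cong_neutral) (auto simp: psi0)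
      then show "(\<lambda>x. \<psi> x * \<omega> y x) summable_on UNIV" using Sf by simp
      have "(\<Sum>\<^sub>\<infinity>x. \<psi> x * \<omega> y x) = (\<Sum>\<^sub>\<infinity>x\<in>S. \<psi> x * \<omega> y x)"
        by (rule infsum_cong_neutral) (auto simp: psi0)
      then show "(\<Sum>\<^sub>\<infinity>x. \<psi> x * \<omega> y x) = M y" using Sf unfolding M_def by simp
    qed
    have Lsplit: "L x = (\<Sum>\<^sub>\<infinity>y. w y * \<omega> x y) - w x * deg x" for x
    proof -
      have "L x = (\<Sum>\<^sub>\<infinity>y. w y * \<omega> x y - w x * \<omega> x y)" unfolding L_def by (simp add: algebra_simps)
      also have "\<dots> = (\<Sum>\<^sub>\<infinity>y. w y * \<omega> x y) - (\<Sum>\<^sub>\<infinity>y. w x * \<omega> x y)"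
        by (rule summable_on_diff_real(2)[OF wsum summable_on_cmult_right[OF degs]])
      also have "(\<Sum>\<^sub>\<infinity>y. w x * \<omega> x y) = w x * deg x" unfolding deg_def by (simp add: infsum_cmult_right')
      finally show ?thesis .
    qed
    define F where "F y = (\<Sum>x\<in>S. \<psi> x * (w y * \<omega> x y))" for y
    have Fsum: "F summable_on UNIV" "(\<Sum>\<^sub>\<infinity>y. F y) = (\<Sum>x\<in>S. \<Sum>\<^sub>\<infinity>y. \<psi> x * (w y * \<omega> x y))"
      using summable_on_finsum_real[OF Sf, of "\<lambda>x y. \<psi> x * (w y * \<omega> x y)" UNIV]
        summable_on_cmult_right[OF wsum] unfolding F_def by auto
    have FM: "F y = w y * M y" for y
      unfolding F_def M_def by (simp add: sum_distrib_left oms mult_ac)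
    define D where "D y = \<psi> y * w y * deg y" for y
    have Dsum: "D summable_on UNIV" "(\<Sum>\<^sub>\<infinity>y. D y) = (\<Sum>x\<in>S. \<psi> x * w x * deg x)"
    proof -
      have "D summable_on UNIV \<longleftrightarrow> D summable_on S"
        by (rule summable_on_cong_neutral) (auto simp: psi0 D_def)
      then show "D summable_on UNIV" using Sf by simp
      have "(\<Sum>\<^sub>\<infinity>y. D y) = (\<Sum>\<^sub>\<infinity>y\<in>S. D y)"
        by (rule infsum_cong_neutral) (auto simp: psi0 D_def)
      then show "(\<Sum>\<^sub>\<infinity>y. D y) = (\<Sum>x\<in>S. \<psi> x * w x * deg x)" using Sf unfolding D_def by simp
    qed
    have ident: "(\<Sum>x\<in>S. \<psi> x * L x) = (\<Sum>\<^sub>\<infinity>y. F y - D y)"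
    proof -
      have "(\<Sum>x\<in>S. \<psi> x * L x) = (\<Sum>x\<in>S. \<Sum>\<^sub>\<infinity>y. \<psi> x * (w y * \<omega> x y)) - (\<Sum>x\<in>S. \<psi> x * w x * deg x)"
        unfolding Lsplit by (simp add: infsum_cmult_right' right_diff_distrib sum_subtractf mult_ac)
      also have "\<dots> = (\<Sum>\<^sub>\<infinity>y. F y) - (\<Sum>\<^sub>\<infinity>y. D y)" using Fsum Dsum by simp
      also have "\<dots> = (\<Sum>\<^sub>\<infinity>y. F y - D y)" using summable_on_diff_real(2)[OF Fsum(1) Dsum(1)] by simp
      finally show ?thesis .
    qed
    define G where "G y = a*C0 * (w y * \<psi> y * \<mu> y) + ((C0+a)/R) * (w y * \<phi> y * \<mu> y)" for y
    have psiS: "(\<lambda>y. w y * \<psi> y * \<mu> y) summable_on UNIV" "(\<Sum>\<^sub>\<infinity>y. w y * \<psi> y * \<mu> y) = T"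
    proof -
      have "(\<lambda>y. w y * \<psi> y * \<mu> y) summable_on UNIV \<longleftrightarrow> (\<lambda>y. w y * \<psi> y * \<mu> y) summable_on S"
        by (rule summable_on_cong_neutral) (auto simp: psi0)
      then show "(\<lambda>y. w y * \<psi> y * \<mu> y) summable_on UNIV" using Sf by simp
      have "(\<Sum>\<^sub>\<infinity>y. w y * \<psi> y * \<mu> y) = (\<Sum>\<^sub>\<infinity>y\<in>S. w y * \<psi> y * \<mu> y)"
        by (rule infsum_cong_neutral) (auto simp: psi0)
      then show "(\<Sum>\<^sub>\<infinity>y. w y * \<psi> y * \<mu> y) = T" using Sf unfolding T_def by simp
    qed
    have Gsum: "G summable_on UNIV" "(\<Sum>\<^sub>\<infinity>y. G y) = a*C0*T + ((C0+a)/R) * A"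
    proof -
      have g1: "(\<lambda>y. a*C0 * (w y * \<psi> y * \<mu> y)) summable_on UNIV" by (rule summable_on_cmult_right[OF psiS(1)])
      have g2: "(\<lambda>y. ((C0+a)/R) * (w y * \<phi> y * \<mu> y)) summable_on UNIV" by (rule summable_on_cmult_right[OF Asum])
      show "G summable_on UNIV" unfolding G_def using summable_on_add[OF g1 g2] .
      show "(\<Sum>\<^sub>\<infinity>y. G y) = a*C0*T + ((C0+a)/R) * A"
        unfolding G_def infsum_add[OF g1 g2] infsum_cmult_right' psiS(2) A_def ..
    qed
    have pointwise: "F y - D y \<le> G y" for y
    proof -
      define E where "E = (\<Sum>\<^sub>\<infinity>x. (\<psi> x - \<psi> y) * \<omega> y x)"
      have s2: "(\<lambda>x. \<psi> y * \<omega> y x) summable_on UNIV" by (rule summable_on_cmult_right[OF degs])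
      have "E = (\<Sum>\<^sub>\<infinity>x. \<psi> x * \<omega> y x - \<psi> y * \<omega> y x)" unfolding E_def by (simp add: algebra_simps)
      also have "\<dots> = M y - \<psi> y * deg y"
        using summable_on_diff_real(2)[OF Msum(1) s2] Msum(2) unfolding deg_def by (simp add: infsum_cmult_right')
      finally have EM: "E = M y - \<psi> y * deg y" .
      define H where "H x = a*\<psi> y*(\<omega> y x*d y x) + (\<phi> y/R)*(\<omega> y x*d y x + a*(\<omega> y x*d y x^2))" for x
      have h1: "(\<lambda>x. a*\<psi> y*(\<omega> y x*d y x)) summable_on UNIV" by (rule summable_on_cmult_right[OF I1s])
      have h2: "(\<lambda>x. a*(\<omega> y x*d y x^2)) summable_on UNIV" by (rule summable_on_cmult_right[OF I2s])
      have h3: "(\<lambda>x. \<omega> y x*d y x + a*(\<omega> y x*d y x^2)) summable_on UNIV" by (rule summable_on_add[OF I1s h2])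
      have h4: "(\<lambda>x. (\<phi> y/R)*(\<omega> y x*d y x + a*(\<omega> y x*d y x^2))) summable_on UNIV" by (rule summable_on_cmult_right[OF h3])
      have Hs: "H summable_on UNIV" unfolding H_def by (rule summable_on_add[OF h1 h4])
      have HI: "(\<Sum>\<^sub>\<infinity>x. H x) = a*\<psi> y*(\<Sum>\<^sub>\<infinity>x. \<omega> y x*d y x) + (\<phi> y/R)*((\<Sum>\<^sub>\<infinity>x. \<omega> y x*d y x) + a*(\<Sum>\<^sub>\<infinity>x. \<omega> y x*d y x^2))"
        unfolding H_def infsum_add[OF h1 h4] infsum_cmult_right' infsum_add[OF I1s h2] ..
      have Es: "(\<lambda>x. (\<psi> x - \<psi> y) * \<omega> y x) summable_on UNIV"
        using summable_on_diff_real(1)[OF Msum(1) s2] by (simp add: algebra_simps)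
      have "E \<le> (\<Sum>\<^sub>\<infinity>x. H x)"
        unfolding E_def
      proof (rule infsum_mono[OF Es Hs])
        fix x
        show "(\<psi> x - \<psi> y) * \<omega> y x \<le> H x"
        proof (cases "\<omega> y x > 0")
          case False
          then have "\<omega> y x = 0" using om0[of y x] by linarith
          then show ?thesis unfolding H_def by simp
        next
          case True
          have dj: "d y x \<le> s" using jump[OF True] .
          have "\<phi> x \<le> \<phi> y * exp (\<alpha> * d y x)"
          proof -
            have "d y x0 \<le> d y x + d x x0" by (rule tri)
            then have "\<alpha> * d y x0 \<le> \<alpha> * (d y x + d x x0)" using assms(14) by (simp add: mult_left_mono)
            then have "- \<alpha> * d x x0 \<le> - \<alpha> * d y x0 + \<alpha> * d y x" by (simp add: algebra_simps)
            then have "exp (- \<alpha> * d x x0) \<le> exp (- \<alpha> * d y x0 + \<alpha> * d y x)" by (simp only: exp_le_cancel_iff)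
            then show ?thesis unfolding \<phi>_def by (simp only: exp_add)
          qed
          also have "\<dots> \<le> \<phi> y * (1 + a * d y x)"
          proof -
            have "exp (\<alpha> * d y x) \<le> 1 + (\<alpha> * d y x) * exp (\<alpha> * d y x)"
              using exp_tangent[of "\<alpha> * d y x"] d0[of y x] assms(14) by simp
            also have "\<dots> \<le> 1 + (\<alpha> * d y x) * exp (s * \<alpha>)"
              using dj d0[of y x] assms(14) by (intro add_left_mono mult_left_mono) (auto simp: mult.commute)
            also have "\<dots> = 1 + a * d y x" unfolding a_def by simp
            finally show ?thesis using phi0[of y] by (intro mult_left_mono) auto
          qed
          finally have fb: "\<phi> x \<le> \<phi> y * (1 + a * d y x)" .
          have cb: "chi x \<le> chi y + d y x / R"
            unfolding chi_def
          proof (rule clamp_lip)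
            have "d y x0 \<le> d y x + d x x0" by (rule tri)
            then show "(2 * R - d x x0) / R \<le> (2 * R - d y x0) / R + d y x / R"
              using R0 by (simp add: divide_right_mono add_divide_distrib[symmetric])
            show "d y x / R \<ge> 0" using d0[of y x] R0 by simp
          qed
          have "(\<phi> x * chi x - \<phi> y * chi y) * \<omega> y x \<le> a * (\<phi> y * chi y) * (\<omega> y x * d y x) + (\<phi> y / R) * (\<omega> y x * d y x + a * (\<omega> y x * d y x ^ 2))"
            by (rule term_bound) (use phi0[of x] phi0[of y] chi01 fb cb d0 om0 a0 R0 in auto)
          then show ?thesis unfolding H_def \<psi>_def by (simp add: mult_ac)
        qed
      qed
      also have "\<dots> \<le> a*C0*\<psi> y*\<mu> y + ((C0+a)/R)*\<phi> y*\<mu> y"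
      proof -
        have "a*\<psi> y*(\<Sum>\<^sub>\<infinity>x. \<omega> y x*d y x) \<le> a*\<psi> y*(C0*\<mu> y)"
          using I1[of y] a0 psinn[of y] by (intro mult_left_mono) auto
        moreover have "(\<phi> y/R)*((\<Sum>\<^sub>\<infinity>x. \<omega> y x*d y x) + a*(\<Sum>\<^sub>\<infinity>x. \<omega> y x*d y x^2)) \<le> (\<phi> y/R)*(C0*\<mu> y + a*\<mu> y)"
          using I1[of y] I2[of y] a0 phi0[of y] R0 by (intro mult_left_mono add_mono) auto
        ultimately have "(\<Sum>\<^sub>\<infinity>x. H x) \<le> a*\<psi> y*(C0*\<mu> y) + (\<phi> y/R)*(C0*\<mu> y + a*\<mu> y)"
          unfolding HI by (rule add_mono)
        also have "\<dots> = a*C0*\<psi> y*\<mu> y + ((C0+a)/R)*\<phi> y*\<mu> y"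
          using R0 by (simp add: field_simps)
        finally show ?thesis .
      qed
      finally have Eb: "E \<le> a*C0*\<psi> y*\<mu> y + ((C0+a)/R)*\<phi> y*\<mu> y" .
      have "F y - D y = w y * E" unfolding FM EM D_def by (simp add: algebra_simps)
      also have "\<dots> \<le> w y * (a*C0*\<psi> y*\<mu> y + ((C0+a)/R)*\<phi> y*\<mu> y)"
        using Eb w0[of y] by (rule mult_left_mono)
      also have "\<dots> = G y" unfolding G_def by (simp add: algebra_simps)
      finally show ?thesis .
    qed
    have "p * c0 * T = (\<Sum>x\<in>S. \<psi> x * (p * c0 * w x * \<mu> x))"
      unfolding T_def by (simp add: sum_distrib_left mult_ac)
    also have "\<dots> \<le> (\<Sum>x\<in>S. \<psi> x * L x)"
      by (rule sum_mono) (rule mult_left_mono[OF kato psinn])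
    also have "\<dots> \<le> (\<Sum>\<^sub>\<infinity>y. G y)"
      unfolding ident
      by (rule infsum_mono[OF summable_on_diff_real(1)[OF Fsum(1) Dsum(1)] Gsum(1) pointwise])
    finally have "p * c0 * T \<le> a*C0*T + ((C0+a)/R) * A" using Gsum(2) by simp
    then have "(c0*p - C0*a) * T \<le> (C0 + a) * A / R" by (simp add: algebra_simps)
    then show ?thesis unfolding T_def \<psi>_def chi_def S_def .
  qed
  show ?thesis
  proof (rule allI, rule ccontr)
    fix z assume uz: "u z \<noteq> 0"
    define q where "q = w z * \<phi> z * \<mu> z"
    have q0: "q > 0" unfolding q_def w_def using uz phi0[of z] mu[of z] by simp
    define e where "e = c0*p - C0*a"
    have e0: "e > 0" using eps unfolding e_def by (simp add: mult.commute)
    define K where "K = C0 + a"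
    define R where "R = max (d z x0 + 1) (K*A/(e*q) + 1)"
    have R0: "R > 0" unfolding R_def using d0[of z x0] by (simp add: max_def)
    have dzR: "d z x0 \<le> R" unfolding R_def by simp
    let ?S = "{y. d y x0 < 2*R}"
    have Sf: "finite ?S" using assms(9) unfolding finite_balls_def by auto
    have zS: "z \<in> ?S" using dzR R0 by simp
    have chiz: "max 0 (min 1 ((2*R - d z x0)/R)) = 1"
      using dzR R0 by (simp add: field_simps)
    have "q \<le> (\<Sum>x\<in>?S. w x * (\<phi> x * max 0 (min 1 ((2*R - d x x0)/R))) * \<mu> x)"
      unfolding q_def using member_le_sum[OF zS _ Sf, of "\<lambda>x. w x * (\<phi> x * max 0 (min 1 ((2*R - d x x0)/R))) * \<mu> x"]
        chiz w0 phi0 mu by (simp add: less_imp_le)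
    then have "e * q \<le> K * A / R" using main[OF R0] e0 unfolding e_def K_def
      by (meson mult_left_mono less_imp_le order_trans)
    then have "e * q * R \<le> K * A" using R0 by (simp add: field_simps)
    then have "R \<le> K * A / (e*q)" using e0 q0 by (simp add: field_simps mult.commute)
    moreover have "K*A/(e*q) + 1 \<le> R" unfolding R_def by simp
    ultimately show False by simp
  qed
qed

end
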